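(* Let $n\ge2$ and $\omega\in\widetilde{S}_n$. Then $\omega$ contains $1342$ if and only if $\omega$ contains $231$; $\omega$ contains $2314$ if and only if it contains $231$; and $\omega$ contains $1423$ if and only if it contains $312$, which holds if and only if it contains $3124$.
   Context: For $n\ge 2$, the affine symmetric group $\widetilde{S}_n$ is the set of bijections $\omega:\mathbb{Z}\to\mathbb{Z}$ such that $\omega(i+n)=\omega(i)+n$ for all $i\in\mathbb{Z}$ and $\sum_{i=1}^n\omega(i)=\binom{n+1}{2}$; write $\omega_i=\omega(i)$. For $p\in S_k$, $\omega$ contains $p$ if there exist integers $i_1<\cdots<i_k$ such that $\omega_{i_1}\cdots\omega_{i_k}$ has the same relative order as $p_1\cdots p_k$; otherwise $\omega$ avoids $p$. *)

theory Defs
  imports Main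
begin

definition affine_perm :: "nat \<Rightarrow> (int \<Rightarrow> int) \<Rightarrow> bool" where
  "affine_perm n w \<longleftrightarrow> bij w \<and> (\<forall>i. w (i + int n) = w i + int n)
     \<and> (\<Sum>i\<in>{1..int n}. w i) = int ((n + 1) choose 2)"

definition contains :: "(int \<Rightarrow> int) \<Rightarrow> nat list \<Rightarrow> bool" where
  "contains w p \<longleftrightarrow> (\<exists>idx :: nat \<Rightarrow> int.
      (\<forall>a b. a < b \<and> b < length p \<longrightarrow> idx a < idx b) \<and>
      (\<forall>a b. a < length p \<and> b < length p \<longrightarrow>
          (w (idx a) < w (idx b) \<longleftrightarrow> p ! a < p ! b)))"

end

theory Submission
  imports Defs
begin

lemma lt3: "(a::nat) < 3 \<longleftrightarrow> a = 0 \<or> a = 1 \<or> a = 2" by arith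
lemma lt4: "(a::nat) < 4 \<longleftrightarrow> a = 0 \<or> a = 1 \<or> a = 2 \<or> a = 3" by arith

lemma c3: "contains w [x,y,z] \<longleftrightarrow> (\<exists>i j k. i < j \<and> j < k \<and>
   (\<forall>a\<in>{0,1,2::nat}. \<forall>b\<in>{0,1,2}. (w ([i,j,k]!a) < w ([i,j,k]!b) \<longleftrightarrow> [x,y,z]!a < [x,y,z]!b)))"
  (is "?L \<longleftrightarrow> (\<exists>i j k. ?R i j k)")
proof
  assume "?L"
  then obtain idx :: "nat \<Rightarrow> int" where h1: "\<forall>a b. a < b \<and> b < length [x,y,z] \<longrightarrow> idx a < idx b"
    and h2: "\<forall>a b. a < length [x,y,z] \<and> b < length [x,y,z] \<longrightarrow> (w (idx a) < w (idx b) \<longleftrightarrow> [x,y,z] ! a < [x,y,z] ! b)"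
    unfolding contains_def by blast
  have "?R (idx 0) (idx 1) (idx 2)"
  proof (intro conjI ballI)
    show "idx 0 < idx 1" "idx 1 < idx 2" using h1 by auto
    fix a b :: nat assume "a \<in> {0,1,2}" "b \<in> {0,1,2}"
    then have "a < 3" "b < 3" "[idx 0, idx 1, idx 2] ! a = idx a" "[idx 0, idx 1, idx 2] ! b = idx b" by auto
    then show "(w ([idx 0, idx 1, idx 2]!a) < w ([idx 0, idx 1, idx 2]!b)) = ([x,y,z]!a < [x,y,z]!b)"
      using h2 by simp
  qed
  then show "\<exists>i j k. ?R i j k" by blast
next
  assume "\<exists>i j k. ?R i j k"
  then obtain i j k where h: "i < j" "j < k"
   "\<forall>a\<in>{0,1,2::nat}. \<forall>b\<in>{0,1,2}. (w ([i,j,k]!a) < w ([i,j,k]!b) \<longleftrightarrow> [x,y,z]!a < [x,y,z]!b)"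
    by blast
  show "?L" unfolding contains_def
  proof (intro exI[of _ "\<lambda>a. [i,j,k]!a"] conjI allI impI)
    fix a b :: nat assume "a < b \<and> b < length [x,y,z]"
    then have "a < b" "b < 3" by auto
    then have "(a=0 \<and> b=1) \<or> (a=0 \<and> b=2) \<or> (a=1 \<and> b=2)" by arith
    then show "[i,j,k]!a < [i,j,k]!b" using h(1,2) by auto
  next
    fix a b :: nat assume "a < length [x,y,z] \<and> b < length [x,y,z]"
    then have "a \<in> {0,1,2}" "b \<in> {0,1,2}" by (auto simp: lt3)
    then show "(w ([i,j,k]!a) < w ([i,j,k]!b)) = ([x,y,z]!a < [x,y,z]!b)" using h(3) by blast
  qed
qed
lemma c4: "contains w [x,y,z,u] \<longleftrightarrow> (\<exists>i j k l. i < j \<and> j < k \<and> k < l \<and>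
   (\<forall>a\<in>{0,1,2,3::nat}. \<forall>b\<in>{0,1,2,3}. (w ([i,j,k,l]!a) < w ([i,j,k,l]!b) \<longleftrightarrow> [x,y,z,u]!a < [x,y,z,u]!b)))"
  (is "?L \<longleftrightarrow> (\<exists>i j k l. ?R i j k l)")
proof
  assume "?L"
  then obtain idx :: "nat \<Rightarrow> int" where h1: "\<forall>a b. a < b \<and> b < length [x,y,z,u] \<longrightarrow> idx a < idx b"
    and h2: "\<forall>a b. a < length [x,y,z,u] \<and> b < length [x,y,z,u] \<longrightarrow> (w (idx a) < w (idx b) \<longleftrightarrow> [x,y,z,u] ! a < [x,y,z,u] ! b)"
    unfolding contains_def by blast
  have "?R (idx 0) (idx 1) (idx 2) (idx 3)"
  proof (intro conjI ballI)
    show "idx 0 < idx 1" "idx 1 < idx 2" "idx 2 < idx 3" using h1 by auto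
    fix a b :: nat assume "a \<in> {0,1,2,3}" "b \<in> {0,1,2,3}"
    then have "a < 4" "b < 4" "[idx 0, idx 1, idx 2, idx 3] ! a = idx a" "[idx 0, idx 1, idx 2, idx 3] ! b = idx b" by auto
    then show "(w ([idx 0, idx 1, idx 2, idx 3]!a) < w ([idx 0, idx 1, idx 2, idx 3]!b)) = ([x,y,z,u]!a < [x,y,z,u]!b)"
      using h2 by simp
  qed
  then show "\<exists>i j k l. ?R i j k l" by blast
next
  assume "\<exists>i j k l. ?R i j k l"
  then obtain i j k l where h: "i < j" "j < k" "k < l"
   "\<forall>a\<in>{0,1,2,3::nat}. \<forall>b\<in>{0,1,2,3}. (w ([i,j,k,l]!a) < w ([i,j,k,l]!b) \<longleftrightarrow> [x,y,z,u]!a < [x,y,z,u]!b)"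
    by blast
  show "?L" unfolding contains_def
  proof (intro exI[of _ "\<lambda>a. [i,j,k,l]!a"] conjI allI impI)
    fix a b :: nat assume "a < b \<and> b < length [x,y,z,u]"
    then have "a < b" "b < 4" by auto
    then have "(a=0 \<and> b=1) \<or> (a=0 \<and> b=2) \<or> (a=1 \<and> b=2) \<or> (a=0 \<and> b=3) \<or> (a=1 \<and> b=3) \<or> (a=2 \<and> b=3)" by arith
    then show "[i,j,k,l]!a < [i,j,k,l]!b" using h(1,2,3) by auto
  next
    fix a b :: nat assume "a < length [x,y,z,u] \<and> b < length [x,y,z,u]"
    then have "a \<in> {0,1,2,3}" "b \<in> {0,1,2,3}" by (auto simp: lt4)
    then show "(w ([i,j,k,l]!a) < w ([i,j,k,l]!b)) = ([x,y,z,u]!a < [x,y,z,u]!b)" using h(4) by blast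
  qed
qed

lemma per_up: assumes "\<forall>i. w (i + int n) = w i + int n"
  shows "w (i + int n * int t) = w i + int n * int t"
proof (induction t)
  case 0 then show ?case by simp
next
  case (Suc t)
  have "w (i + int n * int (Suc t)) = w ((i + int n * int t) + int n)" by (simp add: algebra_simps)
  also have "\<dots> = w (i + int n * int t) + int n" using assms by blast
  also have "\<dots> = w i + int n * int (Suc t)" using Suc by (simp add: algebra_simps)
  finally show ?case .
qed

lemma per_down: assumes "\<forall>i. w (i + int n) = w i + int n"
  shows "w (i - int n * int t) = w i - int n * int t"
  using per_up[OF assms, of "i - int n * int t" t] by simp

theorem mainTheorem11:
  fixes n :: nat and w :: "int \<Rightarrow> int"
  assumes "n \<ge> 2" and "affine_perm n w"
  shows "(contains w [1,3,4,2] \<longleftrightarrow> contains w [2,3,1])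
       \<and> (contains w [2,3,1,4] \<longleftrightarrow> contains w [2,3,1])
       \<and> (contains w [1,4,2,3] \<longleftrightarrow> contains w [3,1,2])
       \<and> (contains w [3,1,2] \<longleftrightarrow> contains w [3,1,2,4])"
proof -
  have per: "\<forall>i. w (i + int n) = w i + int n" using assms(2) unfolding affine_perm_def by blast
  have n1: "int n \<ge> 1" using assms(1) by simp
  have big: "\<exists>t. int n * int t \<ge> c" for c :: int
  proof -
    have "int n * int (nat c) \<ge> int (nat c)" using n1 by (simp add: mult_le_cancel_right1)
    then show ?thesis by (intro exI[of _ "nat c"]) linarith
  qed
  have A: "contains w [2,3,1] \<longleftrightarrow> (\<exists>i j k. i<j \<and> j<k \<and> w k < w i \<and> w i < w j)"
    unfolding c3 by simp (smt (verit))
  have B: "contains w [3,1,2] \<longleftrightarrow> (\<exists>i j k. i<j \<and> j<k \<and> w j < w k \<and> w k < w i)"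
    unfolding c3 by simp (smt (verit))
  have C1: "contains w [1,3,4,2] \<longleftrightarrow> (\<exists>i j k l. i<j \<and> j<k \<and> k<l \<and> w i < w l \<and> w l < w j \<and> w j < w k)"
    unfolding c4 by simp (smt (verit))
  have C2: "contains w [2,3,1,4] \<longleftrightarrow> (\<exists>i j k l. i<j \<and> j<k \<and> k<l \<and> w k < w i \<and> w i < w j \<and> w j < w l)"
    unfolding c4 by simp (smt (verit))
  have C3: "contains w [1,4,2,3] \<longleftrightarrow> (\<exists>i j k l. i<j \<and> j<k \<and> k<l \<and> w i < w k \<and> w k < w l \<and> w l < w j)"
    unfolding c4 by simp (smt (verit))
  have C4: "contains w [3,1,2,4] \<longleftrightarrow> (\<exists>i j k l. i<j \<and> j<k \<and> k<l \<and> w j < w k \<and> w k < w i \<and> w i < w l)"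
    unfolding c4 by simp (smt (verit))
  have pre: "\<exists>h. h < i \<and> w h < v" for i v
  proof -
    obtain t where t: "int n * int t \<ge> \<bar>w i\<bar> + \<bar>v\<bar> + 1" using big by blast
    show ?thesis using per_down[OF per, of i t] t n1
      by (intro exI[of _ "i - int n * int t"]) auto
  qed
  have post: "\<exists>h. h > i \<and> w h > v" for i v
  proof -
    obtain t where t: "int n * int t \<ge> \<bar>w i\<bar> + \<bar>v\<bar> + 1" using big by blast
    show ?thesis using per_up[OF per, of i t] t n1
      by (intro exI[of _ "i + int n * int t"]) auto
  qed
  have 1: "contains w [1,3,4,2] \<longleftrightarrow> contains w [2,3,1]"
    unfolding A C1
  proof
    assume "\<exists>i j k l. i<j \<and> j<k \<and> k<l \<and> w i < w l \<and> w l < w j \<and> w j < w k"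
    then show "\<exists>i j k. i<j \<and> j<k \<and> w k < w i \<and> w i < w j" by blast
  next
    assume "\<exists>i j k. i<j \<and> j<k \<and> w k < w i \<and> w i < w j"
    then obtain i j k where h: "i<j" "j<k" "w k < w i" "w i < w j" by blast
    obtain h0 where "h0 < i" "w h0 < w k" using pre by blast
    then show "\<exists>i j k l. i<j \<and> j<k \<and> k<l \<and> w i < w l \<and> w l < w j \<and> w j < w k"
      using h by blast
  qed
  have 2: "contains w [2,3,1,4] \<longleftrightarrow> contains w [2,3,1]"
    unfolding A C2
  proof
    assume "\<exists>i j k l. i<j \<and> j<k \<and> k<l \<and> w k < w i \<and> w i < w j \<and> w j < w l"
    then show "\<exists>i j k. i<j \<and> j<k \<and> w k < w i \<and> w i < w j" by blast
  next
    assume "\<exists>i j k. i<j \<and> j<k \<and> w k < w i \<and> w i < w j"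
    then obtain i j k where h: "i<j" "j<k" "w k < w i" "w i < w j" by blast
    obtain h0 where "h0 > k" "w h0 > w j" using post by blast
    then show "\<exists>i j k l. i<j \<and> j<k \<and> k<l \<and> w k < w i \<and> w i < w j \<and> w j < w l"
      using h by blast
  qed
  have 3: "contains w [1,4,2,3] \<longleftrightarrow> contains w [3,1,2]"
    unfolding B C3
  proof
    assume "\<exists>i j k l. i<j \<and> j<k \<and> k<l \<and> w i < w k \<and> w k < w l \<and> w l < w j"
    then show "\<exists>i j k. i<j \<and> j<k \<and> w j < w k \<and> w k < w i" by blast
  next
    assume "\<exists>i j k. i<j \<and> j<k \<and> w j < w k \<and> w k < w i"
    then obtain i j k where h: "i<j" "j<k" "w j < w k" "w k < w i" by blast
    obtain h0 where "h0 < i" "w h0 < w j" using pre by blast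
    then show "\<exists>i j k l. i<j \<and> j<k \<and> k<l \<and> w i < w k \<and> w k < w l \<and> w l < w j"
      using h by blast
  qed
  have 4: "contains w [3,1,2] \<longleftrightarrow> contains w [3,1,2,4]"
    unfolding B C4
  proof
    assume "\<exists>i j k. i<j \<and> j<k \<and> w j < w k \<and> w k < w i"
    then obtain i j k where h: "i<j" "j<k" "w j < w k" "w k < w i" by blast
    obtain h0 where "h0 > k" "w h0 > w i" using post by blast
    then show "\<exists>i j k l. i<j \<and> j<k \<and> k<l \<and> w j < w k \<and> w k < w i \<and> w i < w l"
      using h by blast
  next
    assume "\<exists>i j k l. i<j \<and> j<k \<and> k<l \<and> w j < w k \<and> w k < w i \<and> w i < w l"
    then show "\<exists>i j k. i<j \<and> j<k \<and> w j < w k \<and> w k < w i" by blast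
  qed
  show ?thesis using 1 2 3 4 by blast
qed

end
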